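(* Let $A,B\in\mathbb{R}^{m\times n}$ and $b\in\mathbb{R}^m$ with $\operatorname{rank}(A) = m$ and $m<n$, and let $1\le p\le\infty$. If $A^\dagger b\geq 0$, $A^\dagger B\geq0$ and $\|A^\dagger B\|_p<1$, then the equation $Ax-B|x|=b$ has at least one nonnegative solution.
   Context: $A^\dagger$ is the Moore–Penrose inverse; $|x|$ is the entrywise absolute value; vector/matrix inequalities are entrywise; $\|\cdot\|_p$ on matrices is the operator norm induced by the vector $p$-norm. *)

theory Defs
  imports "HOL-Analysis.Analysis" "HOL-Library.Extended_Real"
begin

definition moore_penrose :: "real^'n^'m \<Rightarrow> real^'m^'n" where
  "moore_penrose A = (THE X. A ** X ** A = A \<and> X ** A ** X = X \<and>
      transpose (A ** X) = A ** X \<and> transpose (X ** A) = X ** A)"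

definition vabs :: "real^'n \<Rightarrow> real^'n" where
  "vabs x = (\<chi> i. \<bar>x $ i\<bar>)"

definition vnonneg :: "real^'n \<Rightarrow> bool" where
  "vnonneg x \<longleftrightarrow> (\<forall>i. x $ i \<ge> 0)"

definition mnonneg :: "real^'n^'m \<Rightarrow> bool" where
  "mnonneg M \<longleftrightarrow> (\<forall>i j. M $ i $ j \<ge> 0)"

definition vec_pnorm :: "ereal \<Rightarrow> real^'n \<Rightarrow> real" where
  "vec_pnorm p x = (if p = \<infinity> then Max (range (\<lambda>i. \<bar>x $ i\<bar>))
     else (\<Sum>i\<in>UNIV. \<bar>x $ i\<bar> powr real_of_ereal p) powr (1 / real_of_ereal p))"

definition mat_pnorm :: "ereal \<Rightarrow> real^'n^'m \<Rightarrow> real" where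
  "mat_pnorm p M = (SUP x\<in>{x :: real^'n. x \<noteq> 0}. vec_pnorm p (M *v x) / vec_pnorm p x)"

end

theory Submission
  imports Defs
begin

lemma mp_unique:
  fixes A :: "real^'n^'m" and X Y :: "real^'m^'n"
  assumes x1: "A ** X ** A = A" and x2: "X ** A ** X = X" and x3: "transpose (A ** X) = A ** X"
      and x4: "transpose (X ** A) = X ** A"
  and y1: "A ** Y ** A = A" and y2: "Y ** A ** Y = Y" and y3: "transpose (A ** Y) = A ** Y"
      and y4: "transpose (Y ** A) = Y ** A"
  shows "X = Y"
proof -
  have "X = X ** (A ** X)" using x2 by (simp add: matrix_mul_assoc)
  also have "\<dots> = X ** transpose (A ** X)" using x3 by simp
  also have "\<dots> = X ** transpose X ** transpose A" by (simp add: matrix_transpose_mul matrix_mul_assoc)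
  also have "\<dots> = X ** transpose X ** transpose (A ** Y ** A)" using y1 by simp
  also have "\<dots> = X ** transpose (A ** X) ** transpose (A ** Y)" by (simp add: matrix_transpose_mul matrix_mul_assoc)
  also have "\<dots> = X ** (A ** X) ** (A ** Y)" using x3 y3 by simp
  also have "\<dots> = X ** A ** Y" using x2 by (simp add: matrix_mul_assoc)
  finally have hx: "X = X ** A ** Y" .
  have "Y = (Y ** A) ** Y" using y2 by (simp add: matrix_mul_assoc)
  also have "\<dots> = transpose (Y ** A) ** Y" using y4 by simp
  also have "\<dots> = transpose A ** transpose Y ** Y" by (simp add: matrix_transpose_mul matrix_mul_assoc)
  also have "\<dots> = transpose (A ** X ** A) ** transpose Y ** Y" using x1 by simp
  also have "\<dots> = transpose (X ** A) ** transpose (Y ** A) ** Y" by (simp add: matrix_transpose_mul matrix_mul_assoc)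
  also have "\<dots> = (X ** A) ** (Y ** A) ** Y" using x4 y4 by simp
  also have "\<dots> = X ** A ** (Y ** A ** Y)" by (simp add: matrix_mul_assoc)
  also have "\<dots> = X ** A ** Y" using y2 by simp
  finally show ?thesis using hx by simp
qed

lemma mp_right_inverse:
  fixes A :: "real^'n^'m"
  assumes r: "rank A = CARD('m)"
  shows "A ** moore_penrose A = mat 1"
proof -
  define M where "M = A ** transpose A"
  have injT: "inj ((*v) (transpose A))"
    using r full_rank_injective[of "transpose A"] by (simp add: rank_transpose)
  have "inj ((*v) M)"
  proof (rule injI)
    fix u v assume "M *v u = M *v v"
    hence "M *v (u - v) = 0" by (simp add: matrix_vector_mult_diff_distrib)
    hence "inner (u - v) (M *v (u - v)) = 0" by simp
    hence "inner (transpose A *v (u - v)) (transpose A *v (u - v)) = 0"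
      unfolding M_def by (simp add: dot_lmul_matrix[symmetric] matrix_vector_mul_assoc[symmetric])
    hence "transpose A *v (u - v) = transpose A *v 0" by simp
    hence "u - v = 0" using injT by (meson injD)
    thus "u = v" by simp
  qed
  then obtain G where G: "G ** M = mat 1" using matrix_left_invertible_injective by blast
  hence MG: "M ** G = mat 1" using matrix_left_right_inverse by blast
  have MT: "transpose M = M" unfolding M_def by (simp add: matrix_transpose_mul)
  have "transpose G ** M = mat 1"
    using arg_cong[OF MG, of transpose] MT by (simp add: matrix_transpose_mul)
  hence GT: "transpose G = G"
    by (metis MG matrix_mul_assoc matrix_mul_lid matrix_mul_rid)
  define X where "X = transpose A ** G"
  have AX: "A ** X = mat 1" unfolding X_def using MG M_def by (simp add: matrix_mul_assoc)
  have P: "A ** X ** A = A \<and> X ** A ** X = X \<and> transpose (A ** X) = A ** X \<and> transpose (X ** A) = X ** A"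
    using AX unfolding X_def
    by (simp add: matrix_mul_assoc[symmetric] matrix_transpose_mul GT)
  have "moore_penrose A = X"
    unfolding moore_penrose_def
  proof (rule the_equality)
    show "A ** X ** A = A \<and> X ** A ** X = X \<and> transpose (A ** X) = A ** X \<and> transpose (X ** A) = X ** A" by (rule P)
    fix Y assume "A ** Y ** A = A \<and> Y ** A ** Y = Y \<and> transpose (A ** Y) = A ** Y \<and> transpose (Y ** A) = Y ** A"
    thus "Y = X" using P mp_unique[of A Y X] by blast
  qed
  thus ?thesis using AX by simp
qed
lemma pn_ge:
  fixes z :: "real^'n" and p :: ereal
  assumes "1 \<le> p"
  shows "\<bar>z $ i\<bar> \<le> vec_pnorm p z"
proof (cases "p = \<infinity>")
  case True thus ?thesis unfolding vec_pnorm_def by (simp add: Max_ge)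
next
  case False
  then obtain q where pq: "p = ereal q" using assms by (cases p) auto
  hence q: "1 \<le> q" using assms by simp
  have "\<bar>z $ i\<bar> powr q \<le> (\<Sum>j\<in>UNIV. \<bar>z $ j\<bar> powr q)"
    by (rule member_le_sum) auto
  hence "(\<bar>z $ i\<bar> powr q) powr (1/q) \<le> (\<Sum>j\<in>UNIV. \<bar>z $ j\<bar> powr q) powr (1/q)"
    using q by (intro powr_mono2) auto
  moreover have "(\<bar>z $ i\<bar> powr q) powr (1/q) = \<bar>z $ i\<bar>" using q by (simp add: powr_powr)
  ultimately show ?thesis using False pq unfolding vec_pnorm_def by simp
qed

lemma pn_le:
  fixes z :: "real^'n" and p :: ereal
  assumes "1 \<le> p" "0 \<le> K" "\<And>i. \<bar>z $ i\<bar> \<le> K"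
  shows "vec_pnorm p z \<le> real CARD('n) * K"
proof (cases "p = \<infinity>")
  case True
  have "Max (range (\<lambda>i. \<bar>z $ i\<bar>)) \<le> K" using assms(3) by (simp add: Max_le_iff)
  also have "K \<le> real CARD('n) * K" using assms(2) by (simp add: mult_le_cancel_right1)
  finally show ?thesis using True unfolding vec_pnorm_def by simp
next
  case False
  then obtain q where pq: "p = ereal q" using assms by (cases p) auto
  hence q: "1 \<le> q" using assms by simp
  have "(\<Sum>j\<in>UNIV. \<bar>z $ j\<bar> powr q) \<le> (\<Sum>j\<in>(UNIV::'n set). K powr q)"
    by (rule sum_mono) (use assms q in \<open>auto intro: powr_mono2\<close>)
  also have "\<dots> = real CARD('n) * K powr q" by simp
  finally have "(\<Sum>j\<in>UNIV. \<bar>z $ j\<bar> powr q) powr (1/q) \<le> (real CARD('n) * K powr q) powr (1/q)"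
    using q by (intro powr_mono2) (auto intro: sum_nonneg)
  also have "\<dots> = real CARD('n) powr (1/q) * K"
    using q assms(2) by (simp add: powr_mult powr_powr)
  also have "\<dots> \<le> real CARD('n) * K"
  proof -
    have "real CARD('n) powr (1/q) \<le> real CARD('n) powr 1"
      using q by (intro powr_mono) auto
    thus ?thesis using assms(2) by (intro mult_right_mono) auto
  qed
  finally show ?thesis using False pq unfolding vec_pnorm_def by simp
qed


lemma pn_zero: fixes p :: ereal assumes "1 \<le> p" shows "vec_pnorm p (0::real^'n) = 0"
  using pn_le[OF assms, of 0 "0::real^'n"] pn_ge[OF assms, of "0::real^'n"] by force

lemma pn_pos: fixes p :: ereal and y :: "real^'n" assumes "1 \<le> p" "y \<noteq> 0"
  shows "0 < vec_pnorm p y"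
proof -
  obtain i where "y $ i \<noteq> 0" using assms(2) by (metis vec_eq_iff zero_index)
  thus ?thesis using pn_ge[OF assms(1), of y i] by simp
qed

lemma mv_bound:
  fixes M :: "real^'n^'m" and p :: ereal
  assumes "1 \<le> p"
  shows "vec_pnorm p (M *v y) \<le> real CARD('m) * ((\<Sum>i\<in>UNIV. \<Sum>j\<in>UNIV. \<bar>M$i$j\<bar>) * vec_pnorm p y)"
proof (rule pn_le[OF assms])
  have n0: "0 \<le> vec_pnorm p y" using pn_ge[OF assms, of y] abs_ge_zero order_trans by blast
  show "0 \<le> (\<Sum>i\<in>UNIV. \<Sum>j\<in>UNIV. \<bar>M$i$j\<bar>) * vec_pnorm p y"
    using n0 by (intro mult_nonneg_nonneg sum_nonneg) auto
  fix i
  have "\<bar>(M *v y) $ i\<bar> = \<bar>\<Sum>j\<in>UNIV. M$i$j * y$j\<bar>" by (simp add: matrix_vector_mult_def)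
  also have "\<dots> \<le> (\<Sum>j\<in>UNIV. \<bar>M$i$j * y$j\<bar>)" by (rule sum_abs)
  also have "\<dots> \<le> (\<Sum>j\<in>UNIV. \<bar>M$i$j\<bar> * vec_pnorm p y)"
    by (rule sum_mono) (simp add: abs_mult mult_left_mono pn_ge[OF assms])
  also have "\<dots> = (\<Sum>j\<in>UNIV. \<bar>M$i$j\<bar>) * vec_pnorm p y" by (simp add: sum_distrib_right)
  also have "\<dots> \<le> (\<Sum>i\<in>UNIV. \<Sum>j\<in>UNIV. \<bar>M$i$j\<bar>) * vec_pnorm p y"
    using n0 by (intro mult_right_mono member_le_sum[where f="\<lambda>i. \<Sum>j\<in>UNIV. \<bar>M$i$j\<bar>"]) (auto intro: sum_nonneg)
  finally show "\<bar>(M *v y) $ i\<bar> \<le> (\<Sum>i\<in>UNIV. \<Sum>j\<in>UNIV. \<bar>M$i$j\<bar>) * vec_pnorm p y" .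
qed

lemma ratio_bdd:
  fixes M :: "real^'n^'m" and p :: ereal
  assumes "1 \<le> p"
  shows "bdd_above ((\<lambda>x. vec_pnorm p (M *v x) / vec_pnorm p x) ` {x. x \<noteq> 0})"
proof (rule bdd_aboveI2)
  fix x :: "real^'n" assume "x \<in> {x. x \<noteq> 0}"
  hence pos: "0 < vec_pnorm p x" using pn_pos[OF assms] by simp
  have "vec_pnorm p (M *v x) \<le> (real CARD('m) * (\<Sum>i\<in>UNIV. \<Sum>j\<in>UNIV. \<bar>M$i$j\<bar>)) * vec_pnorm p x"
    using mv_bound[OF assms, of M x] by (simp add: mult.assoc)
  thus "vec_pnorm p (M *v x) / vec_pnorm p x \<le> real CARD('m) * (\<Sum>i\<in>UNIV. \<Sum>j\<in>UNIV. \<bar>M$i$j\<bar>)"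
    using pos by (simp add: divide_le_eq)
qed

lemma mat_bound:
  fixes M :: "real^'n^'m" and p :: ereal
  assumes "1 \<le> p"
  shows "vec_pnorm p (M *v y) \<le> mat_pnorm p M * vec_pnorm p y"
proof (cases "y = 0")
  case True thus ?thesis using pn_zero[OF assms, where 'n='m] pn_zero[OF assms, where 'n='n] by simp
next
  case False
  have pos: "0 < vec_pnorm p y" by (rule pn_pos[OF assms False])
  have "vec_pnorm p (M *v y) / vec_pnorm p y \<le> mat_pnorm p M"
    unfolding mat_pnorm_def using False by (intro cSup_upper ratio_bdd[OF assms]) auto
  thus ?thesis using pos by (simp add: divide_le_eq mult.commute)
qed

lemma mat_nonneg:
  fixes M :: "real^'n^'m" and p :: ereal
  assumes "1 \<le> p"
  shows "0 \<le> mat_pnorm p M"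
proof -
  have ne: "(1::real^'n) \<noteq> 0" by (metis zero_neq_one)
  have "vec_pnorm p (M *v 1) / vec_pnorm p (1::real^'n) \<le> mat_pnorm p M"
    unfolding mat_pnorm_def using ne by (intro cSup_upper ratio_bdd[OF assms]) auto
  moreover have "0 \<le> vec_pnorm p (M *v 1) / vec_pnorm p (1::real^'n)"
    using pn_ge[OF assms, of "M *v 1"] pn_ge[OF assms, of "1::real^'n"]
    by (meson abs_ge_zero divide_nonneg_nonneg order_trans)
  ultimately show ?thesis by linarith
qed


lemma small_le:
  fixes r t a :: real
  assumes "0 \<le> r" "r < 1" "\<And>k. a \<le> r ^ k * t"
  shows "a \<le> 0"
proof -
  have "(\<lambda>k. r ^ k * t) \<longlonglongrightarrow> 0 * t"
    using assms by (intro tendsto_mult tendsto_const LIMSEQ_power_zero) auto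
  thus ?thesis using assms(3) by (intro LIMSEQ_le_const) auto
qed

lemma funpow_add_mv:
  fixes C :: "real^'n^'n"
  shows "(((*v) C) ^^ k) (u + v) = (((*v) C) ^^ k) u + (((*v) C) ^^ k) v"
  by (induction k) (auto simp: matrix_vector_right_distrib)

lemma nonneg_mv:
  fixes C :: "real^'n^'n"
  assumes "mnonneg C" "vnonneg w"
  shows "vnonneg (C *v w)"
  using assms unfolding mnonneg_def vnonneg_def matrix_vector_mult_def
  by (auto intro!: sum_nonneg)

lemma nonneg_funpow:
  fixes C :: "real^'n^'n"
  assumes "mnonneg C" "vnonneg w"
  shows "vnonneg ((((*v) C) ^^ k) w)"
  by (induction k) (auto simp: assms nonneg_mv)

theorem corollary3p7:
  fixes A B :: "real^'n^'m" and b :: "real^'m" and p :: ereal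
  assumes "rank A = CARD('m)"
    and "CARD('m) < CARD('n)"
    and "1 \<le> p"
    and "vnonneg (moore_penrose A *v b)"
    and "mnonneg (moore_penrose A ** B)"
    and "mat_pnorm p (moore_penrose A ** B) < 1"
  shows "\<exists>x :: real^'n. vnonneg x \<and> A *v x - B *v vabs x = b"
proof -
  define X where "X = moore_penrose A"
  define C where "C = X ** B"
  define c where "c = X *v b"
  define r where "r = mat_pnorm p C"
  define T where "T = ((*v) C)"
  have p1: "1 \<le> p" by (rule assms(3))
  have AX: "A ** X = mat 1" unfolding X_def by (rule mp_right_inverse[OF assms(1)])
  have r1: "r < 1" using assms(6) unfolding r_def C_def X_def .
  have r0: "0 \<le> r" unfolding r_def by (rule mat_nonneg[OF p1])
  have Cn: "mnonneg C" using assms(5) unfolding C_def X_def .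
  have cn: "vnonneg c" using assms(4) unfolding c_def X_def .
  have pow: "vec_pnorm p ((T ^^ k) y) \<le> r ^ k * vec_pnorm p y" for k y
  proof (induction k)
    case 0 thus ?case by simp
  next
    case (Suc k)
    have "vec_pnorm p ((T ^^ Suc k) y) = vec_pnorm p (C *v (T ^^ k) y)" by (simp add: T_def)
    also have "\<dots> \<le> r * vec_pnorm p ((T ^^ k) y)" unfolding r_def by (rule mat_bound[OF p1])
    also have "\<dots> \<le> r * (r ^ k * vec_pnorm p y)" using Suc r0 by (intro mult_left_mono) auto
    finally show ?case by (simp add: mult.assoc)
  qed
  define M where "M = mat 1 - C"
  have "inj ((*v) M)"
  proof (rule injI)
    fix u v assume "M *v u = M *v v"
    hence "M *v (u - v) = 0" by (simp add: matrix_vector_mult_diff_distrib)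
    hence fix0: "C *v (u - v) = u - v" unfolding M_def by (simp add: matrix_vector_mult_diff_rdistrib)
    define z where "z = u - v"
    have it: "(T ^^ k) z = z" for k
      by (induction k) (auto simp: T_def fix0 z_def)
    have "vec_pnorm p z \<le> 0"
    proof (rule small_le[OF r0 r1])
      fix k show "vec_pnorm p z \<le> r ^ k * vec_pnorm p z" using pow[of k z] it[of k] by simp
    qed
    hence "\<bar>z $ i\<bar> \<le> 0" for i using pn_ge[OF p1, of z i] by linarith
    hence "z = 0" by (simp add: vec_eq_iff)
    thus "u = v" unfolding z_def by simp
  qed
  then obtain L where "L ** M = mat 1" using matrix_left_invertible_injective by blast
  hence MLi: "M ** L = mat 1" using matrix_left_right_inverse by blast
  define x where "x = L *v c"
  have "M *v x = c" unfolding x_def by (simp add: matrix_vector_mul_assoc MLi)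
  hence xfix: "x = c + T x" unfolding M_def T_def by (simp add: matrix_vector_mult_diff_rdistrib algebra_simps)
  have dec: "x = (\<Sum>j<k. (T ^^ j) c) + (T ^^ k) x" for k
  proof (induction k)
    case 0 show ?case by simp
  next
    case (Suc k)
    have "(T ^^ k) x = (T ^^ k) c + (T ^^ k) (T x)"
      using funpow_add_mv[of k C c "T x"] xfix T_def by metis
    also have "(T ^^ k) (T x) = (T ^^ Suc k) x" by (simp add: funpow_Suc_right del: funpow.simps)
    finally have e: "(T ^^ k) x = (T ^^ k) c + (T ^^ Suc k) x" .
    have "x = (\<Sum>j<k. (T ^^ j) c) + ((T ^^ k) c + (T ^^ Suc k) x)"
      using Suc.IH e by metis
    thus ?case by (simp only: sum.lessThan_Suc add.assoc)
  qed
  have xn: "vnonneg x"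
    unfolding vnonneg_def
  proof
    fix i
    have "- x $ i \<le> 0"
    proof (rule small_le[OF r0 r1])
      fix k
      have "0 \<le> (\<Sum>j<k. (T ^^ j) c) $ i"
        using nonneg_funpow[OF Cn cn] unfolding T_def vnonneg_def by (auto intro: sum_nonneg)
      moreover have "x $ i = (\<Sum>j<k. (T ^^ j) c) $ i + (T ^^ k) x $ i"
        using arg_cong[OF dec[of k], of "\<lambda>v. v $ i"] by simp
      moreover have "\<bar>(T ^^ k) x $ i\<bar> \<le> r ^ k * vec_pnorm p x"
        using pn_ge[OF p1, of "(T ^^ k) x" i] pow[of k x] by linarith
      ultimately show "- x $ i \<le> r ^ k * vec_pnorm p x" by linarith
    qed
    thus "0 \<le> x $ i" by simp
  qed
  have va: "vabs x = x" using xn unfolding vabs_def vnonneg_def by (simp add: vec_eq_iff)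
  have "A *v x = A *v c + A *v (C *v x)"
    using arg_cong[OF xfix, of "(*v) A"] by (simp add: T_def matrix_vector_right_distrib)
  also have "\<dots> = b + B *v x"
    unfolding c_def C_def by (simp add: matrix_vector_mul_assoc matrix_mul_assoc AX)
  finally have "A *v x - B *v vabs x = b" using va by simp
  thus ?thesis using xn by blast
qed

end
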